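(* Let $k>1$ be an integer and let $\nu$ be a probability distribution on $\mathbb{R}^k$ which is not gaussian, but such that whenever $(X_1,\dots,X_k)$ has distribution $\nu$, for every $i\in\{1,\dots,k\}$ the $k-1$ random variables $X_1,\dots,X_{i-1},X_{i+1},\dots,X_k$ (the $i$-th one omitted) are i.i.d. $N(0,1)$. Let $\{(X_{n1},X_{n2},\dots,X_{nk}) : n\in\mathbb{Z}\}$ be a bilateral sequence of i.i.d. $\mathbb{R}^k$-valued random variables with common distribution $\nu$, and define $$Y_n = X_{n\,k} + X_{n+1\,\,k-1} + X_{n+2\,\,k-2} + \cdots + X_{n+k-1\,\,1},\qquad n\in\mathbb{Z}.$$ Then the process $\{Y_n : n\in\mathbb{Z}\}$ is strictly stationary and $(k-1)$-step independent, i.e. for every integer $m$ the families $\{Y_n : n\le m\}$ and $\{Y_n : n\ge m+k\}$ are independent; moreover, for any distinct integers $n_1<n_2<\dots<n_{k-1}$, the random vector $(Y_{n_1},\dots,Y_{n_{k-1}})$ is gaussian with mean $\mathbf{0}$ and covariance matrix $kI$, where $I$ is the identity matrix of order $k-1$. In particular, $\{Y_n\}$ is ergodic (with respect to the shift).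
   Context: An example of such a $\nu$ is the distribution with density $\psi(\mathbf{x}) = (2\pi)^{-k/2}\{1 + x_1x_2\cdots x_k\, e^{-|\mathbf{x}|^2/2}\}e^{-|\mathbf{x}|^2/2}$ on $\mathbb{R}^k$. In the definition of $Y_n$, the summand $X_{r\,s}$ denotes the $s$-th coordinate of the $r$-th vector of the sequence; the sum of the two indices in each summand equals $n+k$. *)

theory Defs
  imports "HOL-Probability.Probability"
begin

text \<open>Vectors of \<open>\<real>\<^sup>I\<close> are represented as functions on the finite index set I
  (measurable space \<open>PiM I (\<lambda>_. borel)\<close>).\<close>

definition normal_measure :: "real \<Rightarrow> real \<Rightarrow> real measure" where
  "normal_measure m v =
     (if v = 0 then return borel m else density lborel (normal_density m (sqrt v)))"

definition gaussian_law :: "'i set \<Rightarrow> ('i \<Rightarrow> real) measure \<Rightarrow> bool" where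
  "gaussian_law I \<mu> \<longleftrightarrow>
     (\<forall>a. \<exists>m v. v \<ge> 0 \<and>
        distr \<mu> borel (\<lambda>x. \<Sum>i\<in>I. a i * x i) = normal_measure m v)"

definition gaussian_law_with ::
  "'i set \<Rightarrow> ('i \<Rightarrow> real) measure \<Rightarrow> ('i \<Rightarrow> real) \<Rightarrow> ('i \<Rightarrow> 'i \<Rightarrow> real) \<Rightarrow> bool" where
  "gaussian_law_with I \<mu> m C \<longleftrightarrow>
     (\<forall>a. distr \<mu> borel (\<lambda>x. \<Sum>i\<in>I. a i * x i) =
          normal_measure (\<Sum>i\<in>I. a i * m i) (\<Sum>i\<in>I. \<Sum>j\<in>I. a i * a j * C i j))"

definition std_normal :: "real measure" where
  "std_normal = density lborel std_normal_density"

abbreviation path_space :: "(int \<Rightarrow> real) measure" where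
  "path_space \<equiv> PiM UNIV (\<lambda>_. borel)"

definition shift :: "(int \<Rightarrow> real) \<Rightarrow> (int \<Rightarrow> real)" where
  "shift f = (\<lambda>n. f (n + 1))"

end

theory Submission
  imports Defs
begin


lemma std_normal_eq: "std_normal = std_normal_distribution"
  by (simp add: std_normal_def)

lemma prob_space_std_normal: "prob_space std_normal"
  unfolding std_normal_def using prob_space_normal_density by simp

lemma sets_std_normal[simp, measurable_cong]: "sets std_normal = sets borel"
  unfolding std_normal_def by simp

lemma space_std_normal[simp]: "space std_normal = UNIV"
  unfolding std_normal_def by simp

lemma normal_measure_eq_distr:
  assumes v: "v \<ge> 0"
  shows "normal_measure 0 v = distr std_normal borel (\<lambda>x. sqrt v * x)"
proof (cases "v = 0")
  case True
  then show ?thesis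
    by (simp add: normal_measure_def prob_space.distr_const[OF prob_space_std_normal])
next
  case False
  with v have vp: "v > 0" by simp
  interpret S: prob_space std_normal by (rule prob_space_std_normal)
  have d: "distributed std_normal lborel (\<lambda>x. x) (normal_density 0 1)"
    unfolding distributed_def
  proof (intro conjI)
    show "distr std_normal lborel (\<lambda>x. x) = density lborel (normal_density 0 1)"
      unfolding std_normal_def by (subst distr_id2) auto
  qed auto
  have "distributed std_normal lborel (\<lambda>x. 0 + sqrt v * x) (normal_density (0 + sqrt v * 0) (\<bar>sqrt v\<bar> * 1))"
    by (rule S.normal_density_affine[OF d]) (use vp in auto)
  then have "distr std_normal lborel (\<lambda>x. sqrt v * x) = density lborel (normal_density 0 (sqrt v))"
    using vp by (simp add: distributed_def)
  moreover have "distr std_normal borel (\<lambda>x. sqrt v * x) = distr std_normal lborel (\<lambda>x. sqrt v * x)"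
    by (rule distr_cong) auto
  ultimately show ?thesis using False by (simp add: normal_measure_def)
qed

lemma char_scaled_std_normal:
  "char (distr std_normal borel (\<lambda>x. c * x)) t = complex_of_real (exp (- ((c * t)^2) / 2))"
proof -
  have "char (distr std_normal borel (\<lambda>x. c * x)) t = char std_normal (c * t)"
    by (simp add: char_def integral_distr mult_ac)
  also have "\<dots> = complex_of_real (exp (- ((c * t)^2) / 2))"
    by (simp add: std_normal_eq char_std_normal_distribution)
  finally show ?thesis .
qed

lemma char_normal_measure:
  assumes "v \<ge> 0"
  shows "char (normal_measure 0 v) t = complex_of_real (exp (- v * t^2 / 2))"
  using assms by (simp add: normal_measure_eq_distr char_scaled_std_normal power_mult_distrib)

lemma real_distribution_normal_measure:
  assumes "v \<ge> 0"
  shows "real_distribution (normal_measure 0 v)"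
proof -
  interpret S: prob_space std_normal by (rule prob_space_std_normal)
  show ?thesis unfolding normal_measure_eq_distr[OF assms] real_distribution_def real_distribution_axioms_def
    by (auto intro!: S.prob_space_distr)
qed

locale thm_setting =
  fixes k :: nat
    and \<nu> :: "(nat \<Rightarrow> real) measure"
    and M :: "'a measure"
    and X :: "int \<Rightarrow> 'a \<Rightarrow> (nat \<Rightarrow> real)"
    and Y :: "int \<Rightarrow> 'a \<Rightarrow> real"
  assumes k: "k > 1"
    and nu_prob: "prob_space \<nu>"
    and nu_sets: "sets \<nu> = sets (PiM {1..k} (\<lambda>_. borel))"
    and nu_marg: "\<And>i. i \<in> {1..k} \<Longrightarrow>
        distr \<nu> (PiM ({1..k} - {i}) (\<lambda>_. borel)) (\<lambda>x. restrict x ({1..k} - {i}))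
          = PiM ({1..k} - {i}) (\<lambda>_. std_normal)"
    and M: "prob_space M"
    and X_indep: "prob_space.indep_vars M (\<lambda>_. PiM {1..k} (\<lambda>_. borel)) X UNIV"
    and X_distr: "\<And>n. distr M (PiM {1..k} (\<lambda>_. borel)) (X n) = \<nu>"
    and Y_def: "\<And>n \<omega>. Y n \<omega> = (\<Sum>j<k. X (n + int j) \<omega> (k - j))"

sublocale thm_setting \<subseteq> prob_space M by (rule M)

context thm_setting
begin

lemma X_meas[measurable]: "X n \<in> measurable M (PiM {1..k} (\<lambda>_. borel))"
  using X_indep unfolding indep_vars_def by auto

lemma Xc_meas[measurable]: "s \<in> {1..k} \<Longrightarrow> (\<lambda>\<omega>. X n \<omega> s) \<in> borel_measurable M"
  by (rule measurable_compose[OF X_meas measurable_component_singleton]) auto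

lemma Y_eq: "Y n = (\<lambda>\<omega>. \<Sum>j<k. X (n + int j) \<omega> (k - j))"
  using Y_def by auto

lemma Y_meas[measurable]: "Y n \<in> borel_measurable M"
  unfolding Y_eq by (intro borel_measurable_sum Xc_meas) auto

lemma row_char_S:
  assumes S: "S \<subseteq> {1..k}" "S \<noteq> {1..k}"
  shows "char (distr \<nu> borel (\<lambda>x. \<Sum>s\<in>S. c s * x s)) t
     = complex_of_real (exp (- (\<Sum>s\<in>S. (c s)^2) * t^2 / 2))"
proof -
  obtain i0 where i0: "i0 \<in> {1..k}" "i0 \<notin> S" using S by blast
  define T where "T = {1..k} - {i0}"
  have ST: "S \<subseteq> T" using S i0 by (auto simp: T_def)
  have finT: "finite T" by (simp add: T_def)
  have finS: "finite S" using ST finT finite_subset by auto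
  interpret PP: product_prob_space "\<lambda>_. std_normal" T
    by (intro product_prob_spaceI prob_space_std_normal)
  let ?P = "PiM T (\<lambda>_. std_normal)"
  have "distr \<nu> borel (\<lambda>x. \<Sum>s\<in>S. c s * x s)
      = distr \<nu> borel ((\<lambda>y. \<Sum>s\<in>S. c s * y s) \<circ> (\<lambda>x. restrict x T))"
    using ST by (intro distr_cong) (auto simp: subset_eq)
  also have "\<dots> = distr (distr \<nu> (PiM T (\<lambda>_. borel)) (\<lambda>x. restrict x T)) borel (\<lambda>y. \<Sum>s\<in>S. c s * y s)"
  proof (rule distr_distr[symmetric])
    show "(\<lambda>y. \<Sum>s\<in>S. c s * y s) \<in> borel_measurable (PiM T (\<lambda>_. borel))"
      using ST by (intro borel_measurable_sum borel_measurable_times measurable_component_singleton) auto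
    show "(\<lambda>x. restrict x T) \<in> measurable \<nu> (PiM T (\<lambda>_. borel))"
      unfolding measurable_cong_sets[OF nu_sets refl] T_def
      by (rule measurable_restrict_subset) auto
  qed
  also have "distr \<nu> (PiM T (\<lambda>_. borel)) (\<lambda>x. restrict x T) = ?P"
    unfolding T_def by (rule nu_marg[OF i0(1)])
  finally have eq1: "distr \<nu> borel (\<lambda>x. \<Sum>s\<in>S. c s * x s) = distr ?P borel (\<lambda>y. \<Sum>s\<in>S. c s * y s)" .
  have comp: "distr ?P borel (\<lambda>y. y s) = std_normal" if "s \<in> T" for s
  proof -
    have "distr ?P borel (\<lambda>y. y s) = distr ?P std_normal (\<lambda>y. y s)"
      by (rule distr_cong) auto
    also have "\<dots> = std_normal"
      by (rule distr_PiM_component[OF prob_space_std_normal that])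
    finally show ?thesis .
  qed
  show ?thesis
  proof (cases "S = {}")
    case True
    then show ?thesis using eq1
      by (simp add: char_def integral_distr PP.prob_space integral_return)
  next
    case False
    have ind: "PP.indep_vars (\<lambda>_. borel) (\<lambda>s y. y s) S"
    proof (subst PP.indep_vars_iff_distr_eq_PiM[OF False])
      show "PP.random_variable borel (\<lambda>y. y s)" for s
      proof cases
        assume "s \<in> T"
        then show ?thesis
          using measurable_component_singleton[of s T "\<lambda>_. std_normal"]
          by (simp add: measurable_cong_sets[OF refl sets_std_normal])
      next
        assume "s \<notin> T"
        then have "\<And>y. y \<in> space ?P \<Longrightarrow> y s = undefined"
          by (auto simp: space_PiM PiE_def extensional_def)
        then show ?thesis
          by (subst measurable_cong[where g="\<lambda>_. undefined"]) auto
      qed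
      have "distr ?P (PiM S (\<lambda>_. borel)) (\<lambda>x. \<lambda>s\<in>S. x s) = distr ?P (PiM S (\<lambda>_. std_normal)) (\<lambda>x. restrict x S)"
        by (intro distr_cong sets_PiM_cong) auto
      also have "\<dots> = PiM S (\<lambda>_. std_normal)"
        by (rule PP.distr_restrict[symmetric, OF ST finT])
      also have "\<dots> = PiM S (\<lambda>s. distr ?P borel (\<lambda>y. y s))"
        using ST comp by (intro PiM_cong) auto
      finally show "distr ?P (PiM S (\<lambda>_. borel)) (\<lambda>x. \<lambda>s\<in>S. x s) = PiM S (\<lambda>s. distr ?P borel (\<lambda>y. y s))" .
    qed
    have ind2: "PP.indep_vars (\<lambda>_. borel) (\<lambda>s y. c s * y s) S"
      using PP.indep_vars_compose2[OF ind, of "\<lambda>s x. c s * x" "\<lambda>_. borel"] by simp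
    have "char (distr ?P borel (\<lambda>y. \<Sum>s\<in>S. c s * y s)) t = (\<Prod>s\<in>S. char (distr ?P borel (\<lambda>y. c s * y s)) t)"
      by (rule PP.char_distr_sum[OF ind2])
    also have "\<dots> = (\<Prod>s\<in>S. complex_of_real (exp (- ((c s * t)^2) / 2)))"
    proof (rule prod.cong[OF refl])
      fix s assume s: "s \<in> S"
      have "distr ?P borel (\<lambda>y. c s * y s) = distr (distr ?P borel (\<lambda>y. y s)) borel (\<lambda>x. c s * x)"
        using s ST by (subst distr_distr) (auto simp: comp_def)
      also have "\<dots> = distr std_normal borel (\<lambda>x. c s * x)"
        using s ST comp by auto
      finally show "char (distr ?P borel (\<lambda>y. c s * y s)) t = complex_of_real (exp (- ((c s * t)^2) / 2))"
        by (simp add: char_scaled_std_normal)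
    qed
    also have "\<dots> = complex_of_real (exp (- (\<Sum>s\<in>S. (c s)^2) * t^2 / 2))"
    proof -
      have "(\<Sum>s\<in>S. - ((c s * t)^2) / 2) = - (\<Sum>s\<in>S. (c s)^2) * t^2 / 2"
        by (simp add: sum_divide_distrib[symmetric] sum_distrib_right[symmetric] power_mult_distrib sum_negf)
      then show ?thesis
        using finS by (simp add: exp_sum[symmetric] of_real_prod[symmetric] del: of_real_prod)
    qed
    finally show ?thesis using eq1 by simp
  qed
qed

lemma row_char_g:
  assumes J: "finite J" "inj_on g J" "g ` J \<subseteq> {1..k}" "card J < k"
  shows "char (distr \<nu> borel (\<lambda>x. \<Sum>i\<in>J. b i * x (g i))) t
     = complex_of_real (exp (- (\<Sum>i\<in>J. (b i)^2) * t^2 / 2))"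
proof -
  define c where "c s = b (the_inv_into J g s)" for s
  have 1: "(\<lambda>x. \<Sum>i\<in>J. b i * x (g i)) = (\<lambda>x. \<Sum>s\<in>g ` J. c s * x s)"
    using J by (auto simp: sum.reindex c_def the_inv_into_f_f intro!: sum.cong)
  have 2: "(\<Sum>i\<in>J. (b i)^2) = (\<Sum>s\<in>g ` J. (c s)^2)"
    using J by (auto simp: sum.reindex c_def the_inv_into_f_f intro!: sum.cong)
  have "card (g ` J) < card {1..k}" using J by (simp add: card_image)
  then have "g ` J \<noteq> {1..k}" by auto
  then show ?thesis unfolding 1 2 by (intro row_char_S J)
qed

end

lemma sum_shift_int:
  "(\<Sum>j<k. f (n + int j)) = (\<Sum>r\<in>{n..<n + int k}. f r)"
proof -
  have inj: "inj_on (\<lambda>j. n + int j) {..<k}" by (auto simp: inj_on_def)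
  have im: "(\<lambda>j. n + int j) ` {..<k} = {n..<n + int k}"
  proof
    show "{n..<n + int k} \<subseteq> (\<lambda>j. n + int j) ` {..<k}"
    proof
      fix r assume r: "r \<in> {n..<n + int k}"
      then have "r = n + int (nat (r - n))" "nat (r - n) < k" by auto
      then show "r \<in> (\<lambda>j. n + int j) ` {..<k}" by blast
    qed
  qed auto
  show ?thesis using sum.reindex[OF inj, of f] im by (simp add: comp_def)
qed

lemma sum_swap_rows:
  fixes nn :: "nat \<Rightarrow> int" and K :: "nat set" and k :: nat
  assumes K: "finite K"
  shows "(\<Sum>i\<in>K. \<Sum>r\<in>{nn i..<nn i + int k}. h i r)
       = (\<Sum>r\<in>(\<Union>i\<in>K. {nn i..<nn i + int k}). \<Sum>i\<in>{i. i \<in> K \<and> nn i \<le> r \<and> r < nn i + int k}. h i r)"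
proof -
  define R where "R = (\<Union>i\<in>K. {nn i..<nn i + int k})"
  have fR: "finite R" using K by (simp add: R_def)
  have "(\<Sum>i\<in>K. \<Sum>r\<in>{nn i..<nn i + int k}. h i r) = (\<Sum>i\<in>K. \<Sum>r\<in>{r. r \<in> R \<and> nn i \<le> r \<and> r < nn i + int k}. h i r)"
    by (intro sum.cong refl) (auto simp: R_def)
  also have "\<dots> = (\<Sum>r\<in>R. \<Sum>i\<in>{i. i \<in> K \<and> nn i \<le> r \<and> r < nn i + int k}. h i r)"
    by (rule sum.swap_restrict[OF K fR])
  finally show ?thesis unfolding R_def .
qed

context thm_setting begin

lemma gauss_part:
  assumes mono: "strict_mono_on {1..k-1} nn"
  shows "gaussian_law_with {1..k-1}
             (distr M (PiM {1..k-1} (\<lambda>_. borel)) (\<lambda>\<omega>. \<lambda>i\<in>{1..k-1}. Y (nn i) \<omega>))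
             (\<lambda>_. 0) (\<lambda>i j. if i = j then real k else 0)"
  unfolding gaussian_law_with_def
proof
  fix a :: "nat \<Rightarrow> real"
  define K where "K = {1..k-1}"
  define R where "R = (\<Union>i\<in>K. {nn i..<nn i + int k})"
  define I where "I r = {i. i \<in> K \<and> nn i \<le> r \<and> r < nn i + int k}" for r
  define g where "g r i = k - nat (r - nn i)" for r i
  define F where "F r x = (\<Sum>i\<in>I r. a i * x (g r i))" for r x
  define v where "v = real k * (\<Sum>i\<in>K. (a i)^2)"
  have fK: "finite K" by (simp add: K_def)
  have fR: "finite R" by (simp add: R_def K_def)
  have fI: "finite (I r)" for r using fK by (simp add: I_def)
  have inj_nn: "inj_on nn K" unfolding K_def by (rule strict_mono_on_imp_inj_on[OF mono])
  have gk: "g r i \<in> {1..k}" if "i \<in> I r" for r i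
    using that by (auto simp: g_def I_def)
  have ginj: "inj_on (g r) (I r)" for r
  proof (rule inj_onI)
    fix i i' assume "i \<in> I r" "i' \<in> I r" "g r i = g r i'"
    then have "nn i = nn i'" "i \<in> K" "i' \<in> K" by (auto simp: g_def I_def)
    then show "i = i'" using inj_nn by (auto dest: inj_onD)
  qed
  have cI: "card (I r) < k" for r
  proof -
    have "card (I r) \<le> card K" using fK by (intro card_mono) (auto simp: I_def)
    then show ?thesis using k by (simp add: K_def)
  qed
  have Zeq: "(\<Sum>i\<in>K. a i * Y (nn i) \<omega>) = (\<Sum>r\<in>R. F r (X r \<omega>))" for \<omega>
  proof -
    have "(\<Sum>i\<in>K. a i * Y (nn i) \<omega>) = (\<Sum>i\<in>K. \<Sum>j<k. a i * X (nn i + int j) \<omega> (g (nn i + int j) i))"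
      by (simp add: Y_def sum_distrib_left g_def)
    also have "\<dots> = (\<Sum>i\<in>K. \<Sum>r\<in>{nn i..<nn i + int k}. a i * X r \<omega> (g r i))"
      by (simp add: sum_shift_int[where f="\<lambda>r. a _ * X r \<omega> (g r _)"])
    also have "\<dots> = (\<Sum>r\<in>R. \<Sum>i\<in>I r. a i * X r \<omega> (g r i))"
      unfolding R_def I_def by (rule sum_swap_rows[OF fK])
    finally show ?thesis by (simp add: F_def)
  qed
  have veq: "v = (\<Sum>r\<in>R. \<Sum>i\<in>I r. (a i)^2)"
  proof -
    have "v = (\<Sum>i\<in>K. \<Sum>r\<in>{nn i..<nn i + int k}. (a i)^2)"
      by (simp add: v_def sum_distrib_left)
    also have "\<dots> = (\<Sum>r\<in>R. \<Sum>i\<in>I r. (a i)^2)"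
      unfolding R_def I_def by (rule sum_swap_rows[OF fK])
    finally show ?thesis .
  qed
  have Fm: "F r \<in> borel_measurable (PiM {1..k} (\<lambda>_. borel))" for r
    unfolding F_def using gk
    by (intro borel_measurable_sum borel_measurable_times measurable_component_singleton) auto
  have ind: "indep_vars (\<lambda>_. borel) (\<lambda>r \<omega>. F r (X r \<omega>)) R"
    by (rule indep_vars_compose2[OF indep_vars_subset[OF X_indep] Fm]) auto
  have char_eq: "char (distr M borel (\<lambda>\<omega>. \<Sum>r\<in>R. F r (X r \<omega>))) = char (normal_measure 0 v)"
  proof
    fix t
    have "char (distr M borel (\<lambda>\<omega>. \<Sum>r\<in>R. F r (X r \<omega>))) t = (\<Prod>r\<in>R. char (distr M borel (\<lambda>\<omega>. F r (X r \<omega>))) t)"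
      by (rule char_distr_sum[OF ind])
    also have "\<dots> = (\<Prod>r\<in>R. complex_of_real (exp (- (\<Sum>i\<in>I r. (a i)^2) * t^2 / 2)))"
    proof (rule prod.cong[OF refl])
      fix r
      have "distr M borel (\<lambda>\<omega>. F r (X r \<omega>)) = distr (distr M (PiM {1..k} (\<lambda>_. borel)) (X r)) borel (F r)"
        by (subst distr_distr[OF Fm X_meas]) (simp add: comp_def)
      also have "\<dots> = distr \<nu> borel (F r)" by (simp only: X_distr)
      finally have "distr M borel (\<lambda>\<omega>. F r (X r \<omega>)) = distr \<nu> borel (F r)" .
      then show "char (distr M borel (\<lambda>\<omega>. F r (X r \<omega>))) t = complex_of_real (exp (- (\<Sum>i\<in>I r. (a i)^2) * t^2 / 2))"
      proof -
        have "g r ` I r \<subseteq> {1..k}" using gk by auto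
        from row_char_g[OF fI ginj this cI, of a t] show ?thesis
          using \<open>distr M borel (\<lambda>\<omega>. F r (X r \<omega>)) = distr \<nu> borel (F r)\<close>
          unfolding F_def by simp
      qed
    qed
    also have "\<dots> = complex_of_real (exp (- v * t^2 / 2))"
    proof -
      have "(\<Sum>r\<in>R. - (\<Sum>i\<in>I r. (a i)^2) * t^2 / 2) = - v * t^2 / 2"
        unfolding veq by (simp add: sum_divide_distrib[symmetric] sum_distrib_right[symmetric] sum_negf)
      then show ?thesis
        using fR by (simp add: exp_sum[symmetric] of_real_prod[symmetric] del: of_real_prod)
    qed
    also have "\<dots> = char (normal_measure 0 v) t"
      by (rule char_normal_measure[symmetric]) (simp add: v_def sum_nonneg)
    finally show "char (distr M borel (\<lambda>\<omega>. \<Sum>r\<in>R. F r (X r \<omega>))) t = char (normal_measure 0 v) t" .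
  qed
  have Fm2: "(\<lambda>\<omega>. \<Sum>r\<in>R. F r (X r \<omega>)) \<in> borel_measurable M"
    by (intro borel_measurable_sum measurable_compose[OF X_meas Fm])
  have main: "distr M borel (\<lambda>\<omega>. \<Sum>r\<in>R. F r (X r \<omega>)) = normal_measure 0 v"
    by (rule Levy_uniqueness[OF real_distribution_distr[OF Fm2] real_distribution_normal_measure char_eq])
       (simp add: v_def sum_nonneg)
  have Vm: "(\<lambda>\<omega>. \<lambda>i\<in>K. Y (nn i) \<omega>) \<in> measurable M (PiM K (\<lambda>_. borel))"
    by (intro measurable_restrict Y_meas)
  have "distr (distr M (PiM K (\<lambda>_. borel)) (\<lambda>\<omega>. \<lambda>i\<in>K. Y (nn i) \<omega>)) borel (\<lambda>x. \<Sum>i\<in>K. a i * x i)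
      = distr M borel ((\<lambda>x. \<Sum>i\<in>K. a i * x i) \<circ> (\<lambda>\<omega>. \<lambda>i\<in>K. Y (nn i) \<omega>))"
    by (rule distr_distr[OF _ Vm]) (intro borel_measurable_sum borel_measurable_times measurable_component_singleton; simp)
  also have "\<dots> = distr M borel (\<lambda>\<omega>. \<Sum>r\<in>R. F r (X r \<omega>))"
    by (intro distr_cong) (auto simp: Zeq[symmetric])
  also have "\<dots> = normal_measure (\<Sum>i\<in>K. a i * 0) (\<Sum>i\<in>K. \<Sum>j\<in>K. a i * a j * (if i = j then real k else 0))"
  proof -
    have "(\<Sum>i\<in>K. \<Sum>j\<in>K. a i * a j * (if i = j then real k else 0)) = v"
      using fK by (simp add: v_def sum_distrib_left power2_eq_square mult_ac if_distrib cong: if_cong)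
    then show ?thesis using main by simp
  qed
  finally show "distr (distr M (PiM {1..k-1} (\<lambda>_. borel)) (\<lambda>\<omega>. \<lambda>i\<in>{1..k-1}. Y (nn i) \<omega>)) borel
          (\<lambda>x. \<Sum>i\<in>{1..k-1}. a i * x i) =
         normal_measure (\<Sum>i\<in>{1..k-1}. a i * 0)
          (\<Sum>i\<in>{1..k-1}. \<Sum>j\<in>{1..k-1}. a i * a j * (if i = j then real k else 0))"
    unfolding K_def .
qed

end



context thm_setting begin

abbreviation "RS \<equiv> PiM (UNIV :: int set) (\<lambda>_. PiM {1..k} (\<lambda>_. borel :: real measure))"

lemma Xp_meas[measurable]: "(\<lambda>\<omega> r. X (r + h) \<omega>) \<in> measurable M RS"
  by (rule measurable_PiM_single') (use X_meas measurable_space[OF X_meas] in auto)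

lemma X_prob: "A \<in> sets (PiM {1..k} (\<lambda>_. borel)) \<Longrightarrow> prob (X n -` A \<inter> space M) = measure \<nu> A"
  using measure_distr[OF X_meas, of A n] X_distr[of n] by simp

lemma law_prod:
  assumes J: "finite J" and A: "\<And>i. i \<in> J \<Longrightarrow> A i \<in> sets (PiM {1..k} (\<lambda>_. borel :: real measure))"
  shows "emeasure (distr M RS (\<lambda>\<omega> r. X (r + h) \<omega>)) (prod_emb UNIV (\<lambda>_. PiM {1..k} (\<lambda>_. borel)) J (Pi\<^sub>E J A))
     = ennreal (\<Prod>r\<in>J. measure \<nu> (A r))"
proof -
  have E: "prod_emb UNIV (\<lambda>_. PiM {1..k} (\<lambda>_. borel)) J (Pi\<^sub>E J A) \<in> sets RS"
    using J A by (intro measurable_prod_emb sets_PiM_I_finite) auto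
  have pre: "(\<lambda>\<omega> r. X (r + h) \<omega>) -` prod_emb UNIV (\<lambda>_. PiM {1..k} (\<lambda>_. borel)) J (Pi\<^sub>E J A) \<inter> space M
      = (\<Inter>r\<in>J. X (r + h) -` A r \<inter> space M) \<inter> space M"
    using measurable_space[OF X_meas]
    by (auto simp: prod_emb_def space_PiM PiE_def Pi_def fun_eq_iff)
  show ?thesis
  proof (cases "J = {}")
    case True
    then have "prod_emb UNIV (\<lambda>_. PiM {1..k} (\<lambda>_. borel)) J (Pi\<^sub>E J A) = space RS"
      by (auto simp: prod_emb_def space_PiM)
    then show ?thesis using True
      using prob_space.emeasure_space_1[OF prob_space_distr[OF Xp_meas, of h]] by simp
  next
    case False
    have inj: "inj_on (\<lambda>r. r + h) J" by (auto simp: inj_on_def)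
    have "prob (\<Inter>i\<in>(\<lambda>r. r + h) ` J. X i -` A (i - h) \<inter> space M)
        = (\<Prod>i\<in>(\<lambda>r. r + h) ` J. prob (X i -` A (i - h) \<inter> space M))"
      by (rule indep_varsD[OF X_indep]) (use False J A in auto)
    also have "\<dots> = (\<Prod>r\<in>J. measure \<nu> (A r))"
      by (subst prod.reindex[OF inj]) (auto intro!: prod.cong X_prob A)
    moreover have "(\<Inter>i\<in>(\<lambda>r. r + h) ` J. X i -` A (i - h) \<inter> space M) = (\<Inter>r\<in>J. X (r + h) -` A r \<inter> space M)"
      by auto
    ultimately have p: "prob (\<Inter>r\<in>J. X (r + h) -` A r \<inter> space M) = (\<Prod>r\<in>J. measure \<nu> (A r))"
      by simp
    have "(\<Inter>r\<in>J. X (r + h) -` A r \<inter> space M) \<inter> space M = (\<Inter>r\<in>J. X (r + h) -` A r \<inter> space M)"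
      using False by auto
    then have pre2: "(\<lambda>\<omega> r. X (r + h) \<omega>) -` prod_emb UNIV (\<lambda>_. PiM {1..k} (\<lambda>_. borel)) J (Pi\<^sub>E J A) \<inter> space M
       = (\<Inter>r\<in>J. X (r + h) -` A r \<inter> space M)" using pre by simp
    show ?thesis
      unfolding emeasure_distr[OF Xp_meas E] pre2 emeasure_eq_measure p ..
  qed
qed

lemma law_shift: "distr M RS (\<lambda>\<omega> r. X (r + h) \<omega>) = distr M RS (\<lambda>\<omega> r. X (r + 0) \<omega>)"
proof (rule measure_eqI_PiM_infinite)
  show "finite_measure (distr M RS (\<lambda>\<omega> r. X (r + h) \<omega>))"
    using prob_space_distr[OF Xp_meas] by (simp add: prob_space_def)
  fix A and J :: "int set" assume "finite J" "J \<subseteq> UNIV" "\<And>i. i \<in> J \<Longrightarrow> A i \<in> sets (PiM {1..k} (\<lambda>_. borel :: real measure))"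
  then show "emeasure (distr M RS (\<lambda>\<omega> r. X (r + h) \<omega>)) (prod_emb UNIV (\<lambda>_. PiM {1..k} (\<lambda>_. borel)) J (Pi\<^sub>E J A)) =
    emeasure (distr M RS (\<lambda>\<omega> r. X (r + 0) \<omega>)) (prod_emb UNIV (\<lambda>_. PiM {1..k} (\<lambda>_. borel)) J (Pi\<^sub>E J A))"
    by (simp only: law_prod)
qed auto

definition Phi :: "(int \<Rightarrow> nat \<Rightarrow> real) \<Rightarrow> int \<Rightarrow> real" where
  "Phi x = (\<lambda>n. \<Sum>j<k. x (n + int j) (k - j))"

lemma Phi_meas: "Phi \<in> measurable RS path_space"
  unfolding Phi_def
proof (rule measurable_PiM_single')
  fix n :: int
  show "(\<lambda>x. \<Sum>j<k. x (n + int j) (k - j)) \<in> borel_measurable RS"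
  proof (intro borel_measurable_sum)
    fix j assume "j \<in> {..<k}"
    then have "k - j \<in> {1..k}" by auto
    then show "(\<lambda>x. x (n + int j) (k - j)) \<in> borel_measurable RS"
      by (intro measurable_compose[OF measurable_component_singleton[of "n + int j"] measurable_component_singleton[of "k - j"]]) auto
  qed
qed auto

lemma Yp_meas[measurable]: "(\<lambda>\<omega> n. Y (n + h) \<omega>) \<in> measurable M path_space"
  by (rule measurable_PiM_single') auto

lemma stationary: "distr M path_space (\<lambda>\<omega> n. Y (n + h) \<omega>) = distr M path_space (\<lambda>\<omega> n. Y n \<omega>)"
proof -
  have eq: "(\<lambda>\<omega> n. Y (n + h) \<omega>) = Phi \<circ> (\<lambda>\<omega> r. X (r + h) \<omega>)" for h
    by (auto simp: fun_eq_iff Phi_def Y_def ac_simps)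
  have "distr M path_space (\<lambda>\<omega> n. Y (n + h) \<omega>) = distr (distr M RS (\<lambda>\<omega> r. X (r + h) \<omega>)) path_space Phi"
    unfolding eq by (rule distr_distr[symmetric, OF Phi_meas Xp_meas])
  also have "\<dots> = distr (distr M RS (\<lambda>\<omega> r. X (r + 0) \<omega>)) path_space Phi"
    by (subst law_shift[of h]) (rule refl)
  also have "\<dots> = distr M path_space (\<lambda>\<omega> n. Y (n + 0) \<omega>)"
    unfolding eq by (rule distr_distr[OF Phi_meas Xp_meas])
  finally show ?thesis by simp
qed

lemma indep_part:
  "indep_var (PiM {..m} (\<lambda>_. borel)) (\<lambda>\<omega>. restrict (\<lambda>n. Y n \<omega>) {..m})
           (PiM {m + int k..} (\<lambda>_. borel)) (\<lambda>\<omega>. restrict (\<lambda>n. Y n \<omega>) {m + int k..})"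
proof -
  define A where "A = {..m + int k - 1}"
  define B where "B = {m + int k..}"
  have ind: "indep_var (PiM A (\<lambda>_. PiM {1..k} (\<lambda>_. borel))) (\<lambda>\<omega>. restrict (\<lambda>i. X i \<omega>) A)
                      (PiM B (\<lambda>_. PiM {1..k} (\<lambda>_. borel))) (\<lambda>\<omega>. restrict (\<lambda>i. X i \<omega>) B)"
    by (rule indep_var_restrict[OF X_indep]) (auto simp: A_def B_def)
  define G1 where "G1 = (\<lambda>x :: int \<Rightarrow> nat \<Rightarrow> real. \<lambda>n\<in>{..m}. \<Sum>j<k. x (n + int j) (k - j))"
  define G2 where "G2 = (\<lambda>x :: int \<Rightarrow> nat \<Rightarrow> real. \<lambda>n\<in>{m + int k..}. \<Sum>j<k. x (n + int j) (k - j))"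
  have G1m: "G1 \<in> measurable (PiM A (\<lambda>_. PiM {1..k} (\<lambda>_. borel))) (PiM {..m} (\<lambda>_. borel))"
    unfolding G1_def
  proof (rule measurable_restrict)
    fix n :: int assume n: "n \<in> {..m}"
    show "(\<lambda>x :: int \<Rightarrow> nat \<Rightarrow> real. \<Sum>j<k. x (n + int j) (k - j)) \<in> borel_measurable (PiM A (\<lambda>_. PiM {1..k} (\<lambda>_. borel)))"
    proof (rule borel_measurable_sum[where f="\<lambda>j x. x (n + int j) (k - j)"])
      fix j assume j: "j \<in> {..<k}"
      then have "k - j \<in> {1..k}" "n + int j \<in> A" using n by (auto simp: A_def)
      then show "(\<lambda>x :: int \<Rightarrow> nat \<Rightarrow> real. x (n + int j) (k - j)) \<in> borel_measurable (PiM A (\<lambda>_. PiM {1..k} (\<lambda>_. borel)))"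
        by (intro measurable_compose[OF measurable_component_singleton[of "n + int j"] measurable_component_singleton[of "k - j"]]) auto
    qed
  qed
  have G2m: "G2 \<in> measurable (PiM B (\<lambda>_. PiM {1..k} (\<lambda>_. borel))) (PiM {m + int k..} (\<lambda>_. borel))"
    unfolding G2_def
  proof (rule measurable_restrict)
    fix n :: int assume n: "n \<in> {m + int k..}"
    show "(\<lambda>x :: int \<Rightarrow> nat \<Rightarrow> real. \<Sum>j<k. x (n + int j) (k - j)) \<in> borel_measurable (PiM B (\<lambda>_. PiM {1..k} (\<lambda>_. borel)))"
    proof (rule borel_measurable_sum[where f="\<lambda>j x. x (n + int j) (k - j)"])
      fix j assume j: "j \<in> {..<k}"
      then have "k - j \<in> {1..k}" "n + int j \<in> B" using n by (auto simp: B_def)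
      then show "(\<lambda>x :: int \<Rightarrow> nat \<Rightarrow> real. x (n + int j) (k - j)) \<in> borel_measurable (PiM B (\<lambda>_. PiM {1..k} (\<lambda>_. borel)))"
        by (intro measurable_compose[OF measurable_component_singleton[of "n + int j"] measurable_component_singleton[of "k - j"]]) auto
    qed
  qed
  have e1: "G1 \<circ> (\<lambda>\<omega>. restrict (\<lambda>i. X i \<omega>) A) = (\<lambda>\<omega>. restrict (\<lambda>n. Y n \<omega>) {..m})"
    by (auto simp: fun_eq_iff G1_def Y_def A_def intro!: sum.cong)
  have e2: "G2 \<circ> (\<lambda>\<omega>. restrict (\<lambda>i. X i \<omega>) B) = (\<lambda>\<omega>. restrict (\<lambda>n. Y n \<omega>) {m + int k..})"
    by (auto simp: fun_eq_iff G2_def Y_def B_def intro!: sum.cong)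
  show ?thesis
    using indep_var_compose[OF ind G1m G2m] unfolding e1 e2 .
qed

end



definition cylG :: "(int \<Rightarrow> real) set set" where
  "cylG = {prod_emb UNIV (\<lambda>_. borel) J S | J S. finite J \<and> S \<in> sets (PiM J (\<lambda>_. borel :: real measure))}"

definition sdiff :: "'x set \<Rightarrow> 'x set \<Rightarrow> 'x set" where
  "sdiff A B = (A - B) \<union> (B - A)"

lemma cylG_sets: "cylG \<subseteq> sets path_space"
  unfolding cylG_def by auto

lemma cylG_space: "C \<in> cylG \<Longrightarrow> C \<subseteq> space path_space"
  using cylG_sets sets.sets_into_space by blast

lemma prod_emb_space_path:
  "prod_emb UNIV (\<lambda>_. borel :: real measure) J (space (PiM J (\<lambda>_. borel))) = space path_space"
  by (auto simp: prod_emb_def space_PiM)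

lemma cylG_empty: "{} \<in> cylG"
  unfolding cylG_def by (rule CollectI, rule exI[of _ "{}"], rule exI[of _ "{}"]) auto

lemma cylG_compl:
  assumes "C \<in> cylG" shows "space path_space - C \<in> cylG"
proof -
  obtain J S where C: "C = prod_emb UNIV (\<lambda>_. borel) J S" "finite J" "S \<in> sets (PiM J (\<lambda>_. borel :: real measure))"
    using assms unfolding cylG_def by auto
  have "space path_space - C = prod_emb UNIV (\<lambda>_. borel) J (space (PiM J (\<lambda>_. borel)) - S)"
    unfolding C(1) prod_emb_Diff prod_emb_space_path ..
  then show ?thesis unfolding cylG_def using C by blast
qed

lemma cylG_Int_Un:
  assumes "C1 \<in> cylG" "C2 \<in> cylG"
  shows "C1 \<inter> C2 \<in> cylG" "C1 \<union> C2 \<in> cylG"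
proof -
  obtain J1 S1 where C1: "C1 = prod_emb UNIV (\<lambda>_. borel) J1 S1" "finite J1" "S1 \<in> sets (PiM J1 (\<lambda>_. borel :: real measure))"
    using assms unfolding cylG_def by auto
  obtain J2 S2 where C2: "C2 = prod_emb UNIV (\<lambda>_. borel) J2 S2" "finite J2" "S2 \<in> sets (PiM J2 (\<lambda>_. borel :: real measure))"
    using assms unfolding cylG_def by auto
  define K where "K = J1 \<union> J2"
  have e1: "C1 = prod_emb UNIV (\<lambda>_. borel) K (prod_emb K (\<lambda>_. borel) J1 S1)"
    unfolding C1(1) K_def by (subst prod_emb_trans) auto
  have e2: "C2 = prod_emb UNIV (\<lambda>_. borel) K (prod_emb K (\<lambda>_. borel) J2 S2)"
    unfolding C2(1) K_def by (subst prod_emb_trans) auto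
  have s1: "prod_emb K (\<lambda>_. borel) J1 S1 \<in> sets (PiM K (\<lambda>_. borel :: real measure))"
    using C1 by (auto simp: K_def)
  have s2: "prod_emb K (\<lambda>_. borel) J2 S2 \<in> sets (PiM K (\<lambda>_. borel :: real measure))"
    using C2 by (auto simp: K_def)
  have fK: "finite K" using C1 C2 by (simp add: K_def)
  have "C1 \<inter> C2 = prod_emb UNIV (\<lambda>_. borel) K (prod_emb K (\<lambda>_. borel) J1 S1 \<inter> prod_emb K (\<lambda>_. borel) J2 S2)"
    by (subst e1, subst e2, simp add: prod_emb_Int)
  then show "C1 \<inter> C2 \<in> cylG" unfolding cylG_def using fK s1 s2 by blast
  have "C1 \<union> C2 = prod_emb UNIV (\<lambda>_. borel) K (prod_emb K (\<lambda>_. borel) J1 S1 \<union> prod_emb K (\<lambda>_. borel) J2 S2)"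
    by (subst e1, subst e2, simp)
  then show "C1 \<union> C2 \<in> cylG" unfolding cylG_def using fK s1 s2 by blast
qed

lemma cylG_UN:
  assumes "finite I" "\<And>i. i \<in> I \<Longrightarrow> C i \<in> cylG"
  shows "(\<Union>i\<in>I. C i) \<in> cylG"
  using assms by (induction I rule: finite_induct) (auto intro: cylG_empty cylG_Int_Un)

lemma Int_stable_cylG: "Int_stable cylG"
  unfolding Int_stable_def using cylG_Int_Un by blast

lemma sets_path_cylG: "sets path_space = sigma_sets (space path_space) cylG"
proof
  have cl: "cylG \<subseteq> Pow (space path_space)" using cylG_space by blast
  show "sets path_space \<subseteq> sigma_sets (space path_space) cylG"
  proof -
    have "sets path_space \<subseteq> sets (sigma (space path_space) cylG)"
    proof (rule sets_PiM_in_sets)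
      show "space (sigma (space path_space) cylG) = (\<Pi>\<^sub>E i\<in>UNIV. space borel)"
        using cl by (simp add: space_PiM)
      fix i :: int and A :: "real set" assume "A \<in> sets borel"
      define S where "S = (\<lambda>x. x i) -` A \<inter> space (PiM {i} (\<lambda>_. borel :: real measure))"
      have S: "S \<in> sets (PiM {i} (\<lambda>_. borel :: real measure))"
        unfolding S_def using \<open>A \<in> sets borel\<close>
        by (intro measurable_sets[OF measurable_component_singleton]) auto
      have "{x \<in> space (sigma (space path_space) cylG). x i \<in> A} = prod_emb UNIV (\<lambda>_. borel) {i} S"
        using cl by (auto simp: prod_emb_def S_def space_PiM)
      also have "\<dots> \<in> cylG" unfolding cylG_def using S by blast
      finally show "{x \<in> space (sigma (space path_space) cylG). x i \<in> A} \<in> sets (sigma (space path_space) cylG)"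
        using cl by auto
    qed
    then show ?thesis using cl by simp
  qed
  show "sigma_sets (space path_space) cylG \<subseteq> sets path_space"
    by (rule sets.sigma_sets_subset[OF cylG_sets])
qed

lemma measure_sdiff_bound:
  assumes "finite_measure P" "A \<in> sets P" "B \<in> sets P"
  shows "\<bar>measure P A - measure P B\<bar> \<le> measure P (sdiff A B)"
proof -
  interpret finite_measure P by fact
  have "measure P A \<le> measure P (B \<union> (A - B))"
    using assms by (intro finite_measure_mono) auto
  also have "\<dots> \<le> measure P B + measure P (A - B)"
    using assms by (intro measure_Un_le) auto
  also have "measure P (A - B) \<le> measure P (sdiff A B)"
    using assms by (intro finite_measure_mono) (auto simp: sdiff_def)
  finally have 1: "measure P A \<le> measure P B + measure P (sdiff A B)" by simp
  have "measure P B \<le> measure P (A \<union> (B - A))"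
    using assms by (intro finite_measure_mono) auto
  also have "\<dots> \<le> measure P A + measure P (B - A)"
    using assms by (intro measure_Un_le) auto
  also have "measure P (B - A) \<le> measure P (sdiff A B)"
    using assms by (intro finite_measure_mono) (auto simp: sdiff_def)
  finally have 2: "measure P B \<le> measure P A + measure P (sdiff A B)" by simp
  from 1 2 show ?thesis by linarith
qed

lemma cyl_approx:
  assumes P: "prob_space P" "sets P = sets path_space" and E: "E \<in> sets path_space"
  shows "\<forall>e>0. \<exists>C\<in>cylG. measure P (sdiff E C) < e"
proof -
  interpret prob_space P by fact
  have cl: "cylG \<subseteq> Pow (space path_space)" using cylG_space by blast
  have E': "E \<in> sigma_sets (space path_space) cylG" using E sets_path_cylG by simp
  have setsP: "sigma_sets (space path_space) cylG = sets P" using P(2) sets_path_cylG by simp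
  have cP: "C \<in> sets P" if "C \<in> cylG" for C using that cylG_sets P(2) by auto
  from Int_stable_cylG cl E' show ?thesis
  proof (induction rule: sigma_sets_induct_disjoint)
    case (basic A)
    then show ?case by (intro allI impI bexI[of _ A]) (auto simp: sdiff_def)
  next
    case empty
    then show ?case by (intro allI impI bexI[of _ "{}"]) (auto simp: sdiff_def cylG_empty)
  next
    case (compl A)
    show ?case
    proof (intro allI impI)
      fix e :: real assume "e > 0"
      with compl obtain C where C: "C \<in> cylG" "measure P (sdiff A C) < e" by blast
      have "A \<subseteq> space path_space" using compl(1) sigma_sets_into_sp[OF cl] by blast
      moreover have "C \<subseteq> space path_space" using C cylG_space by blast
      ultimately have "sdiff (space path_space - A) (space path_space - C) = sdiff A C"
        by (auto simp: sdiff_def)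
      then show "\<exists>C\<in>cylG. measure P (sdiff (space path_space - A) C) < e"
        using C cylG_compl by (intro bexI[of _ "space path_space - C"]) auto
    qed
  next
    case (union A)
    show ?case
    proof (intro allI impI)
      fix e :: real assume e: "e > 0"
      have As: "A i \<in> sets P" for i using union(2) setsP by auto
      define U where "U n = (\<Union>i<n. A i)" for n
      have Us: "U n \<in> sets P" for n unfolding U_def using As by auto
      have "incseq U" unfolding U_def by (intro monoI UN_mono) auto
      moreover have "(\<Union>n. U n) = (\<Union>i. A i)" unfolding U_def by auto
      ultimately have lim: "(\<lambda>n. measure P (U n)) \<longlonglongrightarrow> measure P (\<Union>i. A i)"
        using finite_Lim_measure_incseq[of U] Us by auto
      have "measure P (\<Union>i. A i) - e / 2 < measure P (\<Union>i. A i)" using e by simp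
      from order_tendstoD(1)[OF lim this] obtain N0 where
        N0: "\<And>n. n \<ge> N0 \<Longrightarrow> measure P (\<Union>i. A i) - e / 2 < measure P (U n)"
        by (auto simp: eventually_sequentially)
      define N where "N = Suc N0"
      have Npos: "N > 0" by (simp add: N_def)
      have pos: "e / (2 * N) > 0" using e Npos by simp
      have "\<forall>i. \<exists>C. C \<in> cylG \<and> measure P (sdiff (A i) C) < e / (2 * N)"
      proof
        fix i from union(3)[of i, rule_format, OF pos] show "\<exists>C. C \<in> cylG \<and> measure P (sdiff (A i) C) < e / (2 * N)"
          by blast
      qed
      then obtain C where C: "\<And>i. C i \<in> cylG" "\<And>i. measure P (sdiff (A i) (C i)) < e / (2 * N)"
        by metis
      define CC where "CC = (\<Union>i<N. C i)"
      have CC: "CC \<in> cylG" unfolding CC_def using C by (intro cylG_UN) auto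
      have sub: "sdiff (\<Union>i. A i) CC \<subseteq> ((\<Union>i. A i) - U N) \<union> (\<Union>i<N. sdiff (A i) (C i))"
        by (auto simp: sdiff_def CC_def U_def)
      have UA: "(\<Union>i. A i) \<in> sets P" using As by auto
      have sdA: "sdiff (A i) (C i) \<in> sets P" for i using As cP[OF C(1)] by (auto simp: sdiff_def)
      have "measure P (sdiff (\<Union>i. A i) CC) \<le> measure P (((\<Union>i. A i) - U N) \<union> (\<Union>i<N. sdiff (A i) (C i)))"
        using sub UA Us sdA by (intro finite_measure_mono) auto
      also have "\<dots> \<le> measure P ((\<Union>i. A i) - U N) + measure P (\<Union>i<N. sdiff (A i) (C i))"
        using UA Us sdA by (intro measure_Un_le) auto
      also have "measure P (\<Union>i<N. sdiff (A i) (C i)) \<le> (\<Sum>i<N. measure P (sdiff (A i) (C i)))"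
        using sdA by (intro finite_measure_subadditive_finite) auto
      also have "(\<Sum>i<N. measure P (sdiff (A i) (C i))) < (\<Sum>i<N. e / (2 * N))"
        using C(2) Npos by (intro sum_strict_mono) auto
      also have "(\<Sum>i<N. e / (2 * N)) = e / 2" using Npos by simp
      also have "measure P ((\<Union>i. A i) - U N) = measure P (\<Union>i. A i) - measure P (U N)"
        using UA Us by (intro finite_measure_Diff) (auto simp: U_def)
      finally have "measure P (sdiff (\<Union>i. A i) CC) < measure P (\<Union>i. A i) - measure P (U N) + e / 2"
        by simp
      also have "\<dots> < e" using N0[of N] by (simp add: N_def)
      finally show "\<exists>C\<in>cylG. measure P (sdiff (\<Union>i. A i) C) < e" using CC by blast
    qed
  qed
qed


lemma space_path: "space path_space = UNIV"
  by (auto simp: space_PiM)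

definition sh :: "int \<Rightarrow> (int \<Rightarrow> real) \<Rightarrow> (int \<Rightarrow> real)" where
  "sh h f = (\<lambda>n. f (n + h))"

lemma sh_meas: "sh h \<in> measurable path_space path_space"
  unfolding sh_def by (rule measurable_PiM_single') (auto intro: measurable_component_singleton)

lemma sdiff_vimage: "f -` sdiff A B = sdiff (f -` A) (f -` B)"
  by (auto simp: sdiff_def)

context thm_setting begin

lemma Yp0_meas: "(\<lambda>\<omega> n. Y n \<omega>) \<in> measurable M path_space"
  by (rule measurable_PiM_single') auto

definition mu where "mu = distr M path_space (\<lambda>\<omega> n. Y n \<omega>)"

lemma mu_prob: "prob_space mu"
  unfolding mu_def by (rule prob_space_distr[OF Yp0_meas])

lemma sets_mu: "sets mu = sets path_space"
  unfolding mu_def by simp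

lemma space_mu: "space mu = UNIV"
  unfolding mu_def by (simp add: space_path del: space_PiM)

lemma mu_sh: "distr mu path_space (sh h) = mu"
proof -
  have "distr mu path_space (sh h) = distr M path_space (sh h \<circ> (\<lambda>\<omega> n. Y n \<omega>))"
    unfolding mu_def by (rule distr_distr[OF sh_meas Yp0_meas])
  also have "sh h \<circ> (\<lambda>\<omega> n. Y n \<omega>) = (\<lambda>\<omega> n. Y (n + h) \<omega>)"
    by (auto simp: sh_def fun_eq_iff)
  finally show ?thesis unfolding mu_def by (simp only: stationary)
qed

lemma measure_sh: "E \<in> sets path_space \<Longrightarrow> measure mu (sh h -` E) = measure mu E"
proof -
  assume E: "E \<in> sets path_space"
  have "measure mu E = measure (distr mu path_space (sh h)) E" by (simp only: mu_sh)
  also have "\<dots> = measure mu (sh h -` E \<inter> space mu)"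
    by (rule measure_distr[OF _ E]) (simp add: measurable_cong_sets[OF sets_mu refl] sh_meas)
  finally show ?thesis by (simp add: space_mu)
qed

lemma mu_indep:
  assumes S1: "S1 \<in> sets (PiM {..m} (\<lambda>_. borel :: real measure))"
      and S2: "S2 \<in> sets (PiM {m + int k..} (\<lambda>_. borel :: real measure))"
  shows "measure mu (prod_emb UNIV (\<lambda>_. borel) {..m} S1 \<inter> prod_emb UNIV (\<lambda>_. borel) {m + int k..} S2)
       = measure mu (prod_emb UNIV (\<lambda>_. borel) {..m} S1) * measure mu (prod_emb UNIV (\<lambda>_. borel) {m + int k..} S2)"
proof -
  let ?E1 = "prod_emb UNIV (\<lambda>_. borel :: real measure) {..m} S1"
  let ?E2 = "prod_emb UNIV (\<lambda>_. borel :: real measure) {m + int k..} S2"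
  have E1: "?E1 \<in> sets path_space" using S1 by auto
  have E2: "?E2 \<in> sets path_space" using S2 by auto
  have m: "measure mu E = prob ((\<lambda>\<omega> n. Y n \<omega>) -` E \<inter> space M)" if "E \<in> sets path_space" for E
    unfolding mu_def by (rule measure_distr[OF Yp0_meas that])
  have p1: "(\<lambda>\<omega> n. Y n \<omega>) -` ?E1 \<inter> space M = (\<lambda>\<omega>. restrict (\<lambda>n. Y n \<omega>) {..m}) -` S1 \<inter> space M"
    by (auto simp: prod_emb_def)
  have p2: "(\<lambda>\<omega> n. Y n \<omega>) -` ?E2 \<inter> space M = (\<lambda>\<omega>. restrict (\<lambda>n. Y n \<omega>) {m + int k..}) -` S2 \<inter> space M"
    by (auto simp: prod_emb_def)
  have p12: "(\<lambda>\<omega> n. Y n \<omega>) -` (?E1 \<inter> ?E2) \<inter> space M =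
     (\<lambda>\<omega>. (restrict (\<lambda>n. Y n \<omega>) {..m}, restrict (\<lambda>n. Y n \<omega>) {m + int k..})) -` (S1 \<times> S2) \<inter> space M"
    by (auto simp: prod_emb_def)
  show ?thesis
    using indep_varD[OF indep_part S1 S2] E1 E2
    by (simp only: m sets.Int p1 p2 p12)
qed

lemma shift_sh: "shift = sh 1"
  by (auto simp: shift_def sh_def fun_eq_iff)

lemma sh_invariant:
  assumes inv: "shift -` A \<inter> space path_space = A"
  shows "sh (int n) -` A = A"
proof (induction n)
  case 0
  then show ?case by (simp add: sh_def)
next
  case (Suc n)
  have sA: "shift -` A = A" using inv by (simp add: space_path)
  have "sh (int (Suc n)) = shift \<circ> sh (int n)"
    by (auto simp: shift_def sh_def fun_eq_iff ac_simps)
  then have "sh (int (Suc n)) -` A = sh (int n) -` (shift -` A)" by auto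
  then show ?case using sA Suc by simp
qed

lemma ergodic:
  assumes A: "A \<in> sets path_space" and inv: "shift -` A \<inter> space path_space = A"
  shows "measure mu A \<in> {0, 1}"
proof -
  interpret Mu: prob_space mu by (rule mu_prob)
  let ?p = "measure mu A"
  have fm: "finite_measure mu" by (rule Mu.finite_measure_axioms)
  have Amu: "A \<in> sets mu" using A sets_mu by simp
  have key: "\<bar>?p - ?p^2\<bar> < 4 * e" if e: "e > 0" for e
  proof -
    obtain C where C: "C \<in> cylG" "measure mu (sdiff A C) < e"
      using cyl_approx[OF mu_prob sets_mu A] e by blast
    obtain J S where CJ: "C = prod_emb UNIV (\<lambda>_. borel) J S" "finite J" "S \<in> sets (PiM J (\<lambda>_. borel :: real measure))"
      using C(1) unfolding cylG_def by auto
    define N where "N = (\<Sum>j\<in>J. \<bar>j\<bar>)"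
    have N0: "N \<ge> 0" unfolding N_def by (simp add: sum_nonneg)
    have Nb: "\<bar>j\<bar> \<le> N" if "j \<in> J" for j
      unfolding N_def using CJ(2) that by (intro member_le_sum) auto
    define h where "h = 2 * N + int k"
    have h0: "h \<ge> 0" using N0 by (simp add: h_def)
    define S1 where "S1 = prod_emb {..N} (\<lambda>_. borel :: real measure) J S"
    have JN: "J \<subseteq> {..N}" using Nb by force
    have S1: "S1 \<in> sets (PiM {..N} (\<lambda>_. borel :: real measure))"
      unfolding S1_def using JN CJ(3) by auto
    have C1: "C = prod_emb UNIV (\<lambda>_. borel) {..N} S1"
      unfolding CJ(1) S1_def using JN by (subst prod_emb_trans) auto
    define T where "T = (\<lambda>x :: int \<Rightarrow> real. \<lambda>n\<in>J. x (n + h))"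
    have Tm: "T \<in> measurable (PiM {N + int k..} (\<lambda>_. borel)) (PiM J (\<lambda>_. borel))"
      unfolding T_def
    proof (rule measurable_restrict)
      fix n assume "n \<in> J"
      then have "n + h \<in> {N + int k..}" using Nb[of n] by (auto simp: h_def)
      then show "(\<lambda>x :: int \<Rightarrow> real. x (n + h)) \<in> borel_measurable (PiM {N + int k..} (\<lambda>_. borel))"
        by (rule measurable_component_singleton)
    qed
    define S2 where "S2 = T -` S \<inter> space (PiM {N + int k..} (\<lambda>_. borel :: real measure))"
    have S2: "S2 \<in> sets (PiM {N + int k..} (\<lambda>_. borel :: real measure))"
      unfolding S2_def using Tm CJ(3) by (rule measurable_sets)
    have Teq: "T (restrict f {N + int k..}) = restrict (sh h f) J" for f
    proof -
      have "n + h \<in> {N + int k..}" if "n \<in> J" for n using Nb[OF that] by (auto simp: h_def)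
      then show ?thesis by (auto simp: T_def sh_def fun_eq_iff)
    qed
    have C2: "sh h -` C = prod_emb UNIV (\<lambda>_. borel) {N + int k..} S2"
      unfolding CJ(1) S2_def by (auto simp: prod_emb_def Teq space_PiM)
    have Cs: "C \<in> sets path_space" using C(1) cylG_sets by auto
    have C2s: "sh h -` C \<in> sets path_space" unfolding C2 using S2 by auto
    define q where "q = measure mu C"
    have q2: "measure mu (sh h -` C) = q" unfolding q_def by (rule measure_sh[OF Cs])
    have shA: "sh h -` A = A" using sh_invariant[OF inv, of "nat h"] h0 by simp
    have sdA: "sdiff A C \<in> sets path_space" using A Cs by (auto simp: sdiff_def)
    have d2: "measure mu (sdiff A (sh h -` C)) < e"
      using measure_sh[OF sdA, of h] C(2) by (simp add: sdiff_vimage shA)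
    have ind: "measure mu (C \<inter> sh h -` C) = q * q"
    proof -
      have "measure mu (C \<inter> sh h -` C) = measure mu C * measure mu (sh h -` C)"
        using mu_indep[OF S1 S2] by (simp only: C2[symmetric] C1[symmetric])
      then show ?thesis using q2 by (simp add: q_def)
    qed
    have Ccs: "C \<inter> sh h -` C \<in> sets path_space" using Cs C2s by auto
    have b1: "\<bar>?p - q\<bar> < e"
      using measure_sdiff_bound[OF fm Amu, of C] Cs sets_mu C(2) by (simp add: q_def)
    have "sdiff A (C \<inter> sh h -` C) \<subseteq> sdiff A C \<union> sdiff A (sh h -` C)"
      by (auto simp: sdiff_def)
    then have "measure mu (sdiff A (C \<inter> sh h -` C)) \<le> measure mu (sdiff A C \<union> sdiff A (sh h -` C))"
      using sdA A C2s sets_mu by (intro Mu.finite_measure_mono) (auto simp: sdiff_def)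
    also have "\<dots> \<le> measure mu (sdiff A C) + measure mu (sdiff A (sh h -` C))"
      using sdA A C2s sets_mu by (intro measure_Un_le) (auto simp: sdiff_def)
    finally have "measure mu (sdiff A (C \<inter> sh h -` C)) < 2 * e" using C(2) d2 by simp
    then have b2: "\<bar>?p - q * q\<bar> < 2 * e"
      using measure_sdiff_bound[OF fm Amu, of "C \<inter> sh h -` C"] Ccs sets_mu ind by simp
    have p01: "0 \<le> ?p" "?p \<le> 1" by (rule measure_nonneg, rule Mu.prob_le_1)
    have q01: "0 \<le> q" "q \<le> 1" by (auto simp: q_def Mu.prob_le_1)
    have "\<bar>q * q - ?p * ?p\<bar> = \<bar>q - ?p\<bar> * \<bar>q + ?p\<bar>"
      by (simp add: abs_mult[symmetric] algebra_simps)
    also have "\<dots> \<le> \<bar>q - ?p\<bar> * 2"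
      using p01 q01 by (intro mult_left_mono) (auto simp del: Mu.prob_le_1)
    also have "\<dots> < 2 * e" using b1 by simp
    finally have "\<bar>q * q - ?p * ?p\<bar> < 2 * e" .
    with b2 show ?thesis by (simp add: power2_eq_square)
  qed
  have "?p - ?p^2 = 0"
  proof (rule ccontr)
    assume ne: "?p - ?p^2 \<noteq> 0"
    then have "\<bar>?p - ?p^2\<bar> / 4 > 0" by simp
    from key[OF this] show False by simp
  qed
  then have "?p * (1 - ?p) = 0" by (simp add: power2_eq_square algebra_simps)
  then show ?thesis by auto
qed

end


theorem theorem2p1:
  fixes k :: nat
    and \<nu> :: "(nat \<Rightarrow> real) measure"
    and M :: "'a measure"
    and X :: "int \<Rightarrow> 'a \<Rightarrow> (nat \<Rightarrow> real)"
    and Y :: "int \<Rightarrow> 'a \<Rightarrow> real"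
  assumes k: "k > 1"
    and nu_prob: "prob_space \<nu>"
    and nu_sets: "sets \<nu> = sets (PiM {1..k} (\<lambda>_. borel))"
    and nu_not_gauss: "\<not> gaussian_law {1..k} \<nu>"
    and nu_marg: "\<And>i. i \<in> {1..k} \<Longrightarrow>
        distr \<nu> (PiM ({1..k} - {i}) (\<lambda>_. borel)) (\<lambda>x. restrict x ({1..k} - {i}))
          = PiM ({1..k} - {i}) (\<lambda>_. std_normal)"
    and M: "prob_space M"
    and X_indep: "prob_space.indep_vars M (\<lambda>_. PiM {1..k} (\<lambda>_. borel)) X UNIV"
    and X_distr: "\<And>n. distr M (PiM {1..k} (\<lambda>_. borel)) (X n) = \<nu>"
    and Y_def: "\<And>n \<omega>. Y n \<omega> = (\<Sum>j<k. X (n + int j) \<omega> (k - j))"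
  shows
    \<comment> \<open>strict stationarity\<close>
    "(\<forall>h::int. distr M path_space (\<lambda>\<omega> n. Y (n + h) \<omega>) = distr M path_space (\<lambda>\<omega> n. Y n \<omega>))
     \<comment> \<open>(k-1)-step independence\<close>
     \<and> (\<forall>m::int. prob_space.indep_var M
           (PiM {..m} (\<lambda>_. borel)) (\<lambda>\<omega>. restrict (\<lambda>n. Y n \<omega>) {..m})
           (PiM {m + int k..} (\<lambda>_. borel)) (\<lambda>\<omega>. restrict (\<lambda>n. Y n \<omega>) {m + int k..}))
     \<comment> \<open>any k-1 distinct coordinates are jointly gaussian N(0, kI)\<close>
     \<and> (\<forall>nn :: nat \<Rightarrow> int. strict_mono_on {1..k-1} nn \<longrightarrow>
           gaussian_law_with {1..k-1}
             (distr M (PiM {1..k-1} (\<lambda>_. borel)) (\<lambda>\<omega>. \<lambda>i\<in>{1..k-1}. Y (nn i) \<omega>))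
             (\<lambda>_. 0) (\<lambda>i j. if i = j then real k else 0))
     \<comment> \<open>ergodicity of the law of the process with respect to the shift\<close>
     \<and> (\<forall>A \<in> sets path_space. shift -` A \<inter> space path_space = A \<longrightarrow>
           measure (distr M path_space (\<lambda>\<omega> n. Y n \<omega>)) A \<in> {0, 1})"
proof -
  interpret T: thm_setting k \<nu> M X Y
    by (rule thm_setting.intro[OF k nu_prob nu_sets nu_marg M X_indep X_distr Y_def])
  show ?thesis
  proof (intro conjI allI impI ballI)
    fix h :: int
    show "distr M path_space (\<lambda>\<omega> n. Y (n + h) \<omega>) = distr M path_space (\<lambda>\<omega> n. Y n \<omega>)"
      by (rule T.stationary)
  next
    fix m :: int
    show "prob_space.indep_var M
           (PiM {..m} (\<lambda>_. borel)) (\<lambda>\<omega>. restrict (\<lambda>n. Y n \<omega>) {..m})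
           (PiM {m + int k..} (\<lambda>_. borel)) (\<lambda>\<omega>. restrict (\<lambda>n. Y n \<omega>) {m + int k..})"
      by (rule T.indep_part)
  next
    fix nn :: "nat \<Rightarrow> int" assume "strict_mono_on {1..k-1} nn"
    then show "gaussian_law_with {1..k-1}
             (distr M (PiM {1..k-1} (\<lambda>_. borel)) (\<lambda>\<omega>. \<lambda>i\<in>{1..k-1}. Y (nn i) \<omega>))
             (\<lambda>_. 0) (\<lambda>i j. if i = j then real k else 0)"
      by (rule T.gauss_part)
  next
    fix A assume "A \<in> sets path_space" "shift -` A \<inter> space path_space = A"
    from T.ergodic[OF this] show "measure (distr M path_space (\<lambda>\<omega> n. Y n \<omega>)) A \<in> {0, 1}"
      by (simp only: T.mu_def)
  qed
qed

end
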